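(* For an integer $j\ge1$ and $r\in(0,1)$, let $$B_j(r)=-1-2r+2jr-r^2-\frac{(1-r)^j}{(1+r)^{j-2}}.$$ For every integer $k>2$ the following hold. 1. There exists a unique $r(k)\in(0,1)$ with $B_k(r(k))=0$. Equivalently, $r(k)$ is the unique point in $(0,1)$ at which $K_k(r)=-\frac{1-r}{8(1+r)^2}B_k(r)$ vanishes. 2. $r(k)$ is a simple root, i.e. $B_k'(r(k))\neq0$. 3. $B_j(r(k))\neq0$ for every integer $j\ge1$ with $j\neq k$. Moreover, the coefficient $y_1=-\frac{3r+1}{4(1+r)^2}$ is nonzero. 4. If $k_1>k_2>2$, then $r(k_1)<r(k_2)$. *)

theory Defs
  imports "HOL-Analysis.Analysis"
begin

text \<open>B_j(r) = -1 - 2r + 2jr - r^2 - (1-r)^j / (1+r)^(j-2); the exponent j-2 may be -1 (j = 1),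
  so an integer power is used.\<close>
definition B :: "nat \<Rightarrow> real \<Rightarrow> real" where
  "B j r = -1 - 2*r + 2*real j*r - r^2 - (1 - r)^j / ((1 + r) powi (int j - 2))"

definition K :: "nat \<Rightarrow> real \<Rightarrow> real" where
  "K k r = - ((1 - r) / (8 * (1 + r)^2)) * B k r"

definition rk :: "nat \<Rightarrow> real" where
  "rk k = (THE r. 0 < r \<and> r < 1 \<and> B k r = 0)"

end

theory Submission
  imports Defs
begin

definition qq :: "real \<Rightarrow> real" where "qq r = (1 - r) / (1 + r)"
definition G :: "nat \<Rightarrow> real \<Rightarrow> real" where "G j x = real j * (1 - x^2) - 2 - 2 * x^j"

lemma B_G: assumes "r > -1" shows "B j r = (1+r)^2/2 * G j (qq r)"
proof -
  have ne: "1 + r \<noteq> 0" using assms by auto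
  have "(1+r) powi (int j - 2) = (1+r)^j / (1+r)^2"
    using ne by (simp add: power_int_diff)
  hence "(1 - r)^j / ((1 + r) powi (int j - 2)) = (1+r)^2 * (qq r)^j"
    using ne by (simp add: qq_def power_divide)
  hence "B j r = -1 - 2*r + 2*real j*r - r^2 - (1+r)^2 * (qq r)^j"
    by (simp add: B_def)
  also have "\<dots> = (1+r)^2/2 * G j (qq r)"
  proof -
    have "(1+r)^2 * (1 - (qq r)^2) = 4*r"
    proof -
      have "(1+r)^2 * (qq r)^2 = (1-r)^2" using ne by (simp add: qq_def power_divide)
      hence "(1+r)^2 * (1 - (qq r)^2) = (1+r)^2 - (1-r)^2" by (simp add: right_diff_distrib)
      thus ?thesis by (simp add: power2_eq_square algebra_simps)
    qed
    hence e0: "real j / 2 * ((1+r)^2 * (1 - (qq r)^2)) = real j / 2 * (4*r)" by simp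
    have e: "(1+r)^2/2 * (real j * (1 - (qq r)^2)) = 2*real j*r"
      using e0 by (simp add: algebra_simps)
    have h: "(1+r)^2/2 * G j (qq r) = (1+r)^2/2 * (real j * (1 - (qq r)^2)) - (1+r)^2 - (1+r)^2 * (qq r)^j"
      unfolding G_def by (simp add: algebra_simps)
    have sq: "(1+r)^2 = 1 + 2*r + r^2" by (simp add: power2_eq_square algebra_simps)
    show ?thesis using h e sq by linarith
  qed
  finally show ?thesis .
qed

lemma G_dec: assumes "j \<ge> 1" "0 \<le> a" "a < b" "b \<le> 1" shows "G j b < G j a"
proof -
  have "a^2 < b^2" using assms by (simp add: power_strict_mono)
  hence "real j * (1 - b^2) < real j * (1 - a^2)" using assms by simp
  moreover have "a^j \<le> b^j" using assms by (simp add: power_mono)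
  ultimately show ?thesis unfolding G_def by linarith
qed

lemma G_Suc: assumes "0 < x" "x < 1" shows "G j x < G (Suc j) x"
proof -
  have "0 < x^j * (1 - x)" using assms by simp
  moreover have "0 < 1 - x^2" using assms by (simp add: power_less_one_iff)
  moreover have "G (Suc j) x - G j x = (1 - x^2) + 2 * (x^j * (1 - x))"
    unfolding G_def by (simp add: algebra_simps)
  ultimately show ?thesis by linarith
qed

lemma G_inc: assumes "0 < x" "x < 1" "i < j" shows "G i x < G j x"
  using lift_Suc_mono_less[of "\<lambda>j. G j x", OF G_Suc[OF assms(1,2)] assms(3)] .

lemma G_root: assumes "k > 2" shows "\<exists>x. 0 < x \<and> x < 1 \<and> G k x = 0"
proof -
  have c: "\<forall>x. 0 \<le> x \<and> x \<le> 1 \<longrightarrow> isCont (G k) x" unfolding G_def by (auto intro!: continuous_intros)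
  have "G k 1 \<le> 0" "0 \<le> G k 0" using assms by (auto simp: G_def zero_power)
  from IVT2[of "G k" 1 0 0, OF this _ c] obtain x where x: "0 \<le> x" "x \<le> 1" "G k x = 0" by auto
  have "x \<noteq> 0" using x assms by (auto simp: G_def zero_power)
  moreover have "x \<noteq> 1" using x by (auto simp: G_def)
  ultimately show ?thesis using x by (intro exI[of _ x]) auto
qed

lemma qq_range: "0 < r \<Longrightarrow> r < 1 \<Longrightarrow> 0 < qq r \<and> qq r < 1"
  by (auto simp: qq_def field_simps)

lemma qq_inj: "r > -1 \<Longrightarrow> s > -1 \<Longrightarrow> qq r = qq s \<Longrightarrow> r = s"
  by (auto simp: qq_def field_simps)

lemma qq_mono: "0 < r \<Longrightarrow> r < s \<Longrightarrow> qq s < qq r"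
  by (auto simp: qq_def field_simps)

lemma G_uniq: assumes "k \<ge> 1" "0 < a" "a < 1" "0 < b" "b < 1" "G k a = 0" "G k b = 0" shows "a = b"
  using G_dec[of k a b] G_dec[of k b a] assms by (cases a b rule: linorder_cases) auto

lemma B_zero_iff: assumes "0 < r" "r < 1" shows "B k r = 0 \<longleftrightarrow> G k (qq r) = 0"
  using B_G[of r k] assms by auto

lemma ex1B: assumes "k > 2" shows "\<exists>!r. 0 < r \<and> r < 1 \<and> B k r = 0"
proof -
  obtain x where x: "0 < x" "x < 1" "G k x = 0" using G_root[OF assms] by blast
  define r where "r = (1 - x)/(1 + x)"
  have r: "0 < r" "r < 1" using x by (auto simp: r_def field_simps)
  have "qq r = x" using x by (simp add: r_def qq_def field_simps)
  hence "B k r = 0" using B_zero_iff r x by auto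
  moreover have "s = r" if "0 < s" "s < 1" "B k s = 0" for s
  proof -
    have "G k (qq s) = 0" using B_zero_iff that by auto
    hence "qq s = qq r" using G_uniq[of k "qq s" "qq r"] qq_range[OF that(1,2)] qq_range[OF r] assms
      \<open>qq r = x\<close> x by auto
    thus ?thesis using qq_inj that r by auto
  qed
  ultimately show ?thesis using r by blast
qed

lemma dG: "(G k has_field_derivative (real k * (-(2*y)) - 2*(real k * y^(k-1)))) (at y)"
  unfolding G_def by (auto intro!: derivative_eq_intros simp: algebra_simps)

lemma dqq: "x > -1 \<Longrightarrow> (qq has_field_derivative (-2/(1+x)^2)) (at x)"
  unfolding qq_def by (auto intro!: derivative_eq_intros simp: field_simps power2_eq_square)

lemma deriv_B: assumes "k > 2" "0 < r" "r < 1" "B k r = 0" shows "deriv (B k) r \<noteq> 0"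
proof -
  define y where "y = qq r"
  have y: "0 < y" "y < 1" "G k y = 0" using qq_range[OF assms(2,3)] B_zero_iff[OF assms(2,3)] assms(4)
    by (auto simp: y_def)
  define Gd where "Gd = real k * (-(2*y)) - 2*(real k * y^(k-1))"
  have "0 < real k * y^(k-1)" "0 < real k * y" using y assms by auto
  hence Gd: "Gd < 0" unfolding Gd_def by (simp add: mult.commute)
  have c: "((\<lambda>x. G k (qq x)) has_field_derivative Gd * (-2/(1+r)^2)) (at r)"
    using DERIV_chain2[OF dG[of k "qq r"] dqq[of r]] assms by (simp add: Gd_def y_def)
  have sq: "((\<lambda>x. (1+x)^2/2) has_field_derivative (1+r)) (at r)"
    by (auto intro!: derivative_eq_intros)
  have p: "((\<lambda>x. (1+x)^2/2 * G k (qq x)) has_field_derivative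
      (1+r) * G k (qq r) + Gd * (-2/(1+r)^2) * ((1+r)^2/2)) (at r)"
    using DERIV_mult[OF sq c] by simp
  have val: "(1+r) * G k (qq r) + Gd * (-2/(1+r)^2) * ((1+r)^2/2) = - Gd"
    using y assms by (simp add: y_def[symmetric] field_simps)
  have "(B k has_field_derivative -Gd) (at r)"
  proof (rule has_field_derivative_transform_within_open[OF _ open_greaterThan[of "-1"]])
    show "((\<lambda>x. (1+x)^2/2 * G k (qq x)) has_field_derivative -Gd) (at r)" using p val by simp
    show "r \<in> {-1<..}" using assms by simp
    show "\<And>x. x \<in> {-1<..} \<Longrightarrow> (1+x)^2/2 * G k (qq x) = B k x" using B_G by simp
  qed
  hence "deriv (B k) r = -Gd" by (rule DERIV_imp_deriv)
  thus ?thesis using Gd by simp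
qed

lemma rk_props: assumes "k > 2" shows "0 < rk k" "rk k < 1" "B k (rk k) = 0" "G k (qq (rk k)) = 0"
proof -
  have "0 < rk k \<and> rk k < 1 \<and> B k (rk k) = 0"
    unfolding rk_def by (rule theI'[OF ex1B[OF assms]])
  thus "0 < rk k" "rk k < 1" "B k (rk k) = 0" by auto
  thus "G k (qq (rk k)) = 0" using B_zero_iff by auto
qed

lemma K_iff: "0 < r \<Longrightarrow> r < 1 \<Longrightarrow> K k r = 0 \<longleftrightarrow> B k r = 0"
  by (auto simp: K_def)

lemma Bj_ne: assumes "k > 2" "j \<ge> 1" "j \<noteq> k" shows "B j (rk k) \<noteq> 0"
proof -
  note r = rk_props[OF assms(1)]
  have y: "0 < qq (rk k)" "qq (rk k) < 1" using qq_range r by auto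
  have "G j (qq (rk k)) \<noteq> 0"
    using G_inc[OF y, of j k] G_inc[OF y, of k j] r(4) assms(3) by (cases j k rule: linorder_cases) auto
  thus ?thesis using B_G[of "rk k" j] r by auto
qed

lemma rk_mono: assumes "k1 > k2" "k2 > 2" shows "rk k1 < rk k2"
proof -
  note r1 = rk_props[of k1] and r2 = rk_props[of k2]
  have k1: "k1 > 2" using assms by auto
  have y1: "0 < qq (rk k1)" "qq (rk k1) < 1" using qq_range r1 k1 by auto
  have y2: "0 < qq (rk k2)" "qq (rk k2) < 1" using qq_range r2 assms by auto
  have "G k1 (qq (rk k2)) > 0" using G_inc[OF y2 assms(1)] r2 assms by auto
  hence "qq (rk k2) < qq (rk k1)"
    using G_dec[of k1 "qq (rk k1)" "qq (rk k2)"] y1 y2 r1(4)[OF k1] k1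
    by (cases "qq (rk k2)" "qq (rk k1)" rule: linorder_cases) auto
  thus ?thesis using qq_mono[of "rk k1" "rk k2"] qq_mono[of "rk k2" "rk k1"] r1 r2 k1 assms
    by (cases "rk k1" "rk k2" rule: linorder_cases) auto
qed

theorem mainTheorem6:
  shows "(\<forall>k::nat. k > 2 \<longrightarrow>
            (\<exists>!r. 0 < r \<and> r < 1 \<and> B k r = 0)
          \<and> (\<exists>!r. 0 < r \<and> r < 1 \<and> K k r = 0)
          \<and> 0 < rk k \<and> rk k < 1 \<and> B k (rk k) = 0
          \<and> deriv (B k) (rk k) \<noteq> 0
          \<and> (\<forall>j::nat. j \<ge> 1 \<and> j \<noteq> k \<longrightarrow> B j (rk k) \<noteq> 0)
          \<and> - (3 * rk k + 1) / (4 * (1 + rk k)^2) \<noteq> 0)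
       \<and> (\<forall>k1 k2::nat. k1 > k2 \<and> k2 > 2 \<longrightarrow> rk k1 < rk k2)"
proof (intro conjI allI impI)
  fix k :: nat assume k: "k > 2"
  note r = rk_props[OF k]
  show "\<exists>!r. 0 < r \<and> r < 1 \<and> B k r = 0" by (rule ex1B[OF k])
  show "\<exists>!r. 0 < r \<and> r < 1 \<and> K k r = 0"
    using ex1B[OF k] K_iff[of _ k] by metis
  show "0 < rk k" "rk k < 1" "B k (rk k) = 0" using r by auto
  show "deriv (B k) (rk k) \<noteq> 0" using deriv_B[OF k] r by auto
  show "B j (rk k) \<noteq> 0" if "1 \<le> j \<and> j \<noteq> k" for j using Bj_ne[OF k] that by auto
  have "3 * rk k + 1 > 0" "(1 + rk k)^2 > 0" using r by auto
  thus "- (3 * rk k + 1) / (4 * (1 + rk k)^2) \<noteq> 0" by simp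
next
  fix k1 k2 :: nat assume "k2 < k1 \<and> 2 < k2"
  thus "rk k1 < rk k2" using rk_mono by auto
qed

end
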